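(* Assume $K>1$, $N_r\ge K$, all users share the same parameters $\alpha_k=\alpha$, $c_k=c$, $a_k=a$ ($|a|<1$), data power $P_k=P$ and pilot power $P_{p,k}=P_p$. Let $s=\frac{\sigma_p^2}{\alpha^2P_p\tau_p}$, $\hat e,\check e,z$ as in the definitions below, $\phi=\alpha^2P(\hat ec+\check eca^* )$ and $\beta=K\alpha^2Pz+\sigma_d^2$. Then for every $(P,P_p)$ with $P,P_p>0$ the equation $\frac{\beta}{\phi}=\frac{N_r}{\bar\gamma}-\frac{K-1}{1+\bar\gamma}$ has a unique positive solution $\bar\gamma(P,P_p)$, which is a strictly decreasing function of $\beta/\phi$. Consequently, for $\tau_p,\tau_d\ge1$ and $P_{\mathrm{tot}}>0$, the pairs $(P,P_p)$ maximizing $\bar\gamma(P,P_p)$ subject to $P\tau_d+P_p\tau_p=P_{\mathrm{tot}}$, $P,P_p>0$, are exactly those maximizing $\phi/\beta$ subject to the same constraint.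
   Context: $\hat e=\frac{c(c+s-|a|^2c)}{(c+s)^2-|a|^2c^2}$, $\check e=\frac{acs}{(c+s)^2-|a|^2c^2}$, $z=\frac{cs(c+s-|a|^2c)}{(c+s)^2-|a|^2c^2}$, with $c>0$, $\sigma_p^2,\sigma_d^2>0$. $\tau_p,\tau_d$ are the numbers of pilot and data symbols; $P_{\mathrm{tot}}$ is the per-user total power budget. The equation for $\bar\gamma$ is the average-SINR equation of the MMSE receiver specialized to identical users. *)

theory Defs
  imports Complex_Main
begin

definition s_par :: "real \<Rightarrow> real \<Rightarrow> real \<Rightarrow> nat \<Rightarrow> real" where
  "s_par sp2 \<alpha> Pp \<tau>p = sp2 / (\<alpha>^2 * Pp * real \<tau>p)"

definition den :: "real \<Rightarrow> complex \<Rightarrow> real \<Rightarrow> real" where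
  "den c a s = (c + s)^2 - (cmod a)^2 * c^2"

definition ehat :: "real \<Rightarrow> complex \<Rightarrow> real \<Rightarrow> real" where
  "ehat c a s = c * (c + s - (cmod a)^2 * c) / den c a s"

definition echeck :: "real \<Rightarrow> complex \<Rightarrow> real \<Rightarrow> complex" where
  "echeck c a s = a * complex_of_real (c * s) / complex_of_real (den c a s)"

definition zvar :: "real \<Rightarrow> complex \<Rightarrow> real \<Rightarrow> real" where
  "zvar c a s = c * s * (c + s - (cmod a)^2 * c) / den c a s"

text \<open>phi = alpha^2 P (ehat c + echeck c conj(a)); this expression is real
  (echeck c conj a = |a|^2 c^2 s / den), we take its real part.\<close>
definition phi :: "real \<Rightarrow> real \<Rightarrow> real \<Rightarrow> complex \<Rightarrow> real \<Rightarrow> real" where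
  "phi \<alpha> P c a s = Re (complex_of_real (\<alpha>^2 * P) *
      (complex_of_real (ehat c a s * c) + echeck c a s * complex_of_real c * cnj a))"

definition beta :: "nat \<Rightarrow> real \<Rightarrow> real \<Rightarrow> real \<Rightarrow> complex \<Rightarrow> real \<Rightarrow> real \<Rightarrow> real" where
  "beta K \<alpha> P c a s sd2 = real K * \<alpha>^2 * P * zvar c a s + sd2"

definition sinr_eq :: "nat \<Rightarrow> nat \<Rightarrow> real \<Rightarrow> real \<Rightarrow> bool" where
  "sinr_eq Nr K r g \<longleftrightarrow> r = real Nr / g - (real K - 1) / (1 + g)"

definition gbar :: "nat \<Rightarrow> nat \<Rightarrow> real \<Rightarrow> real" where
  "gbar Nr K r = (THE g. g > 0 \<and> sinr_eq Nr K r g)"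

end

theory Submission
  imports Defs
begin

lemma inv_le_lem:
  fixes B F B' F' :: real
  assumes "0 < B/F" "0 < B'/F'"
  shows "(B/F \<le> B'/F') = (F'/B' \<le> F/B)"
  using inverse_le_iff_le[OF assms(2,1)] by (simp add: inverse_divide)

lemma pos_params:
  fixes c s :: real and a :: complex
  assumes c: "c > 0" and s: "s > 0" and a: "cmod a < 1"
  shows "den c a s > 0" "ehat c a s > 0" "zvar c a s > 0"
proof -
  have a2: "(cmod a)^2 < 1" using a by (simp add: abs_square_less_1)
  have m: "(cmod a)^2 * c < c" using a2 c by simp
  have m2: "(cmod a)^2 * c^2 < c^2" using a2 c by (simp add: power2_eq_square)
  have "c^2 < (c+s)^2" using c s by (simp add: power_strict_mono)
  thus d: "den c a s > 0" unfolding den_def using m2 by linarith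
  have "c + s - (cmod a)^2 * c > 0" using m s by linarith
  thus "ehat c a s > 0" "zvar c a s > 0" unfolding ehat_def zvar_def using d c s by auto
qed

lemma phi_eq:
  shows "phi \<alpha> P c a s = \<alpha>^2 * P * (ehat c a s * c + (cmod a)^2 * c * s * c / den c a s)"
proof -
  have "echeck c a s * complex_of_real c * cnj a = complex_of_real ((cmod a)^2 * c * s * c / den c a s)"
    unfolding echeck_def by (simp add: field_simps) (metis complex_norm_square of_real_power)
  thus ?thesis unfolding phi_def by simp
qed

lemma phi_pos:
  assumes "c > 0" "s > 0" "cmod a < 1" "\<alpha> > 0" "P > 0"
  shows "phi \<alpha> P c a s > 0"
proof -
  note p = pos_params[OF assms(1-3)]
  have "(cmod a)^2 * c * s * c / den c a s \<ge> 0" using p assms by auto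
  moreover have "ehat c a s * c > 0" using p assms by auto
  ultimately show ?thesis unfolding phi_eq using assms by (simp add: add_pos_nonneg)
qed

lemma f_mono:
  fixes N K :: nat and x y :: real
  assumes "N \<ge> K" "K \<ge> 1" "0 < x" "x < y"
  shows "real N / y - (real K - 1) / (1 + y) < real N / x - (real K - 1) / (1 + x)"
proof -
  have k: "real K - 1 \<ge> 0" "real N > real K - 1" using assms by auto
  have "(real K - 1) * (x*y) < real N * ((1+x)*(1+y))"
  proof -
    have "(real K - 1) * (x*y) \<le> (real K - 1) * ((1+x)*(1+y))"
      using k assms by (intro mult_left_mono) (auto simp: algebra_simps)
    also have "\<dots> < real N * ((1+x)*(1+y))" using k assms by (intro mult_strict_right_mono) auto
    finally show ?thesis .
  qed
  hence pos: "0 < (y - x) * (real N * ((1+x)*(1+y)) - (real K - 1) * (x*y))"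
    using assms by (intro mult_pos_pos) auto
  have "(real N / x - (real K - 1) / (1 + x)) - (real N / y - (real K - 1) / (1 + y))
      = (y - x) * (real N * ((1+x)*(1+y)) - (real K - 1) * (x*y)) / (x*y*(1+x)*(1+y))"
    proof -
    have nz: "x \<noteq> 0" "y \<noteq> 0" "1 + x \<noteq> 0" "1 + y \<noteq> 0" "x + x*x \<noteq> 0" "y + y*y \<noteq> 0"
      "x*y*(1+x)*(1+y) \<noteq> 0"
    proof -
      have "x*x > 0" "y*y > 0" using assms by simp_all
      thus "x + x*x \<noteq> 0" "y + y*y \<noteq> 0" using assms by linarith+
    qed (use assms in auto)
    show ?thesis using nz by (simp add: field_simps)
    qed
  also have "\<dots> > 0" using pos assms by (intro divide_pos_pos) auto
  finally show ?thesis by simp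
qed

lemma exists_sol:
  fixes N K :: nat and r :: real
  assumes "N \<ge> K" "K \<ge> 1" "r > 0"
  shows "\<exists>g>0. sinr_eq N K r g"
proof -
  define b where "b = r + real K - 1 - real N"
  define D where "D = b^2 + 4*r*real N"
  define g where "g = (-b + sqrt D)/(2*r)"
  have N: "real N > 0" using assms by auto
  have "b^2 < D" unfolding D_def using N assms by auto
  hence "sqrt (b^2) < sqrt D" by (simp only: real_sqrt_less_iff)
  hence "\<bar>b\<bar> < sqrt D" by simp
  hence gp: "g > 0" unfolding g_def using assms by (auto intro: divide_pos_pos)
  have Dn: "D \<ge> 0" using \<open>b^2 < D\<close> zero_le_power2[of b] by linarith
  have sq: "(sqrt D)^2 = D" using Dn by simp
  have q: "r*g^2 + b*g - real N = 0"
    unfolding g_def using assms sq unfolding D_def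
    by (simp add: field_simps power2_eq_square)
  have "1 + g \<noteq> 0" "g + g*g \<noteq> 0" using gp mult_pos_pos[OF gp gp] by linarith+
  hence "sinr_eq N K r g" unfolding sinr_eq_def using gp q unfolding b_def
    by (simp add: field_simps power2_eq_square)
  thus ?thesis using gp by blast
qed


theorem lemma4:
  fixes K Nr \<tau>p :: nat and \<alpha> c sp2 sd2 :: real and a :: complex
  assumes "K > 1" and "Nr \<ge> K" and "cmod a < 1" and "\<alpha> > 0" and "c > 0"
    and "sp2 > 0" and "sd2 > 0" and "\<tau>p \<ge> 1"
  defines "Phi \<equiv> \<lambda>P Pp. phi \<alpha> P c a (s_par sp2 \<alpha> Pp \<tau>p)"
    and "Beta \<equiv> \<lambda>P Pp. beta K \<alpha> P c a (s_par sp2 \<alpha> Pp \<tau>p) sd2"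
  shows
    "(\<forall>P Pp. P > 0 \<longrightarrow> Pp > 0 \<longrightarrow>
        (\<exists>!g. g > 0 \<and> sinr_eq Nr K (Beta P Pp / Phi P Pp) g))
   \<and> (\<forall>P1 Pp1 P2 Pp2. P1 > 0 \<longrightarrow> Pp1 > 0 \<longrightarrow> P2 > 0 \<longrightarrow> Pp2 > 0 \<longrightarrow>
        Beta P1 Pp1 / Phi P1 Pp1 < Beta P2 Pp2 / Phi P2 Pp2 \<longrightarrow>
        gbar Nr K (Beta P2 Pp2 / Phi P2 Pp2) < gbar Nr K (Beta P1 Pp1 / Phi P1 Pp1))
   \<and> (\<forall>(\<tau>d::nat) (Ptot::real). \<tau>d \<ge> 1 \<longrightarrow> Ptot > 0 \<longrightarrow>
        (\<forall>P Pp. P > 0 \<longrightarrow> Pp > 0 \<longrightarrow> P * real \<tau>d + Pp * real \<tau>p = Ptot \<longrightarrow>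
          ((\<forall>P' Pp'. P' > 0 \<longrightarrow> Pp' > 0 \<longrightarrow> P' * real \<tau>d + Pp' * real \<tau>p = Ptot \<longrightarrow>
              gbar Nr K (Beta P' Pp' / Phi P' Pp') \<le> gbar Nr K (Beta P Pp / Phi P Pp))
           \<longleftrightarrow>
           (\<forall>P' Pp'. P' > 0 \<longrightarrow> Pp' > 0 \<longrightarrow> P' * real \<tau>d + Pp' * real \<tau>p = Ptot \<longrightarrow>
              Phi P' Pp' / Beta P' Pp' \<le> Phi P Pp / Beta P Pp))))"
  proof -
  have Kg: "K \<ge> 1" using assms(1) by simp
  have rpos: "Beta P Pp / Phi P Pp > 0" if "P > 0" "Pp > 0" for P Pp
  proof -
    have s: "s_par sp2 \<alpha> Pp \<tau>p > 0" unfolding s_par_def using assms that by auto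
    note p = pos_params[OF assms(5) s assms(3)]
    have "Phi P Pp > 0" unfolding Phi_def using phi_pos[OF assms(5) s assms(3,4) that(1)] .
    moreover have "Beta P Pp > 0" unfolding Beta_def beta_def using p assms that
      by (intro add_nonneg_pos) auto
    ultimately show ?thesis by simp
  qed
  have feq: "sinr_eq Nr K r g \<longleftrightarrow> r = real Nr / g - (real K - 1) / (1 + g)" for r g
    by (simp add: sinr_eq_def)
  have uniq: "\<exists>!g. g > 0 \<and> sinr_eq Nr K r g" if rp: "r > 0" for r
  proof -
    obtain g where g: "g > 0" "sinr_eq Nr K r g" using exists_sol[OF assms(2) Kg rp] by blast
    have "h = g" if "h > 0" "sinr_eq Nr K r h" for h
    proof (rule ccontr)
      assume "h \<noteq> g"
      hence "h < g \<or> g < h" by auto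
      thus False
      proof
        assume "h < g" thus False using f_mono[OF assms(2) Kg that(1), of g] g(2) that(2) unfolding feq by linarith
      next
        assume "g < h" thus False using f_mono[OF assms(2) Kg g(1), of h] g(2) that(2) unfolding feq by linarith
      qed
    qed
    thus ?thesis using g by blast
  qed
  have gb: "gbar Nr K r > 0 \<and> sinr_eq Nr K r (gbar Nr K r)" if "r > 0" for r
    unfolding gbar_def using theI'[OF uniq[OF that]] .
  have mono: "gbar Nr K r2 < gbar Nr K r1" if "0 < r1" "r1 < r2" for r1 r2
  proof (rule ccontr)
    assume "\<not> ?thesis"
    hence "gbar Nr K r1 \<le> gbar Nr K r2" by simp
    hence "gbar Nr K r1 = gbar Nr K r2 \<or> gbar Nr K r1 < gbar Nr K r2" by auto
    have g1: "gbar Nr K r1 > 0" "r1 = real Nr / gbar Nr K r1 - (real K - 1) / (1 + gbar Nr K r1)"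
      using gb[of r1] that unfolding feq by auto
    have g2: "r2 = real Nr / gbar Nr K r2 - (real K - 1) / (1 + gbar Nr K r2)"
      using gb[of r2] that unfolding feq by auto
    thus False
    proof (cases "gbar Nr K r1 = gbar Nr K r2")
      case True thus False using g1 g2 that by simp
    next
      case False
      hence "gbar Nr K r1 < gbar Nr K r2" using \<open>gbar Nr K r1 \<le> gbar Nr K r2\<close> by simp
      from f_mono[OF assms(2) Kg g1(1) this] show False using g1 g2 that by linarith
    qed
  qed
  have miff: "gbar Nr K r2 \<le> gbar Nr K r1 \<longleftrightarrow> r1 \<le> r2" if "0 < r1" "0 < r2" for r1 r2
  proof (cases r1 r2 rule: linorder_cases)
    case less thus ?thesis using mono[of r1 r2] that by simp
  next
    case equal thus ?thesis by simp
  next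
    case greater thus ?thesis using mono[of r2 r1] that by simp
  qed
  have inv: "Phi P Pp / Beta P Pp = 1 / (Beta P Pp / Phi P Pp)" for P Pp by simp
  show ?thesis
  proof (intro conjI allI impI)
    fix P Pp :: real assume "P > 0" "Pp > 0"
    thus "\<exists>!g. g > 0 \<and> sinr_eq Nr K (Beta P Pp / Phi P Pp) g" using uniq rpos by blast
  next
    fix P1 Pp1 P2 Pp2 :: real
    assume "P1 > 0" "Pp1 > 0" "P2 > 0" "Pp2 > 0" "Beta P1 Pp1 / Phi P1 Pp1 < Beta P2 Pp2 / Phi P2 Pp2"
    thus "gbar Nr K (Beta P2 Pp2 / Phi P2 Pp2) < gbar Nr K (Beta P1 Pp1 / Phi P1 Pp1)"
      using mono rpos by blast
  next
    fix \<tau>d :: nat and Ptot P Pp :: real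
    assume h: "P > 0" "Pp > 0"
    have e: "gbar Nr K (Beta P' Pp' / Phi P' Pp') \<le> gbar Nr K (Beta P Pp / Phi P Pp)
      \<longleftrightarrow> Phi P' Pp' / Beta P' Pp' \<le> Phi P Pp / Beta P Pp" if "P' > 0" "Pp' > 0" for P' Pp'
    proof -
      have a: "Beta P Pp / Phi P Pp > 0" "Beta P' Pp' / Phi P' Pp' > 0" using rpos h that by auto
      show ?thesis unfolding miff[OF a] inv_le_lem[OF a] ..
    qed
    show "(\<forall>P' Pp'. P' > 0 \<longrightarrow> Pp' > 0 \<longrightarrow> P' * real \<tau>d + Pp' * real \<tau>p = Ptot \<longrightarrow>
              gbar Nr K (Beta P' Pp' / Phi P' Pp') \<le> gbar Nr K (Beta P Pp / Phi P Pp))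
           \<longleftrightarrow>
           (\<forall>P' Pp'. P' > 0 \<longrightarrow> Pp' > 0 \<longrightarrow> P' * real \<tau>d + Pp' * real \<tau>p = Ptot \<longrightarrow>
              Phi P' Pp' / Beta P' Pp' \<le> Phi P Pp / Beta P Pp)"
      using e by blast
  qed
qed

end
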